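(* Let $K$ be a stochastic kernel on a compact space $\Sigma$ with Borel $\sigma$-algebra $\mathscr{F}$, let $\Sigma_0\subset\Sigma_1\subset\Sigma_2$ be sets in $\mathscr{F}$ and $r>0$. Assume: (A1) $\mathscr{P}_{n_0}(x,\Sigma_0)\ge b_0>0$ for all $x\in\Sigma_0$; (A2) $\mathscr{P}_{n_1}(x,\Sigma_1)\ge1-r/4$ for all $x\in\Sigma_1\setminus\Sigma_0$; (A3) $\mathscr{P}_{n_2}(x,\Sigma_2)\ge1-r/4$ for all $x\in\Sigma_2\setminus\Sigma_1$; (A4) $\mathscr{P}^*_n(x,\Sigma_1^{\complement})\ge1-r/4$ for all $x\in\Sigma_2^{\complement}$ and all $n\ge0$. If $(1-b_0)^q<r/4$ for some $q\in\mathbb{N}$, then with $N:=qn_0+n_1+n_2$, for all $x\in\Sigma$, $$\mathbb{P}_x[\exists\, j\ge N:\ \xi^x_j\in\Sigma_1]<r.$$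
   Context: For $x\in\Sigma$ let $\mathbb{P}_x$ be the probability on $\Sigma^{\mathbb{N}}$ under which the coordinate process $\{\xi^x_n\}_{n\ge0}$ is a Markov chain with kernel $K$ and $\xi^x_0=x$. For $x\in E\in\mathscr{F}$: $\mathscr{P}_n(x,E)=\mathbb{P}_x[\xi^x_j\notin E\text{ for some }0\le j\le n]$ and $\mathscr{P}^*_n(x,E)=\mathbb{P}_x[\xi^x_j\in E\text{ for all }0\le j\le n]$. Here $n_0,n_1,n_2\in\mathbb{N}$. *)

theory Defs
  imports "HOL-Probability.Probability"
begin

definition stochastic_kernel :: "('a::topological_space \<Rightarrow> 'a measure) \<Rightarrow> bool" where
  "stochastic_kernel K \<longleftrightarrow> K \<in> borel \<rightarrow>\<^sub>M prob_algebra borel"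

text \<open>These conditions determine the finite-dimensional distributions, hence P uniquely.\<close>
definition markov_chain_law ::
  "('a::topological_space \<Rightarrow> 'a measure) \<Rightarrow> 'a \<Rightarrow> (nat \<Rightarrow> 'a) measure \<Rightarrow> bool" where
  "markov_chain_law K x P \<longleftrightarrow>
     prob_space P \<and> sets P = sets (PiM UNIV (\<lambda>_. borel)) \<and>
     (AE \<omega> in P. \<omega> 0 = x) \<and>
     (\<forall>n B A. B \<in> sets (PiM {..n} (\<lambda>_. borel)) \<longrightarrow> A \<in> sets borel \<longrightarrow>
        measure P {\<omega> \<in> space P. restrict \<omega> {..n} \<in> B \<and> \<omega> (Suc n) \<in> A}
        = (\<integral>\<omega>. indicator B (restrict \<omega> {..n}) * measure (K (\<omega> n)) A \<partial>P))"

definition exit_prob :: "(nat \<Rightarrow> 'a) measure \<Rightarrow> nat \<Rightarrow> 'a set \<Rightarrow> real" where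
  "exit_prob P n E = measure P {\<omega> \<in> space P. \<exists>j\<le>n. \<omega> j \<notin> E}"

definition stay_prob :: "(nat \<Rightarrow> 'a) measure \<Rightarrow> nat \<Rightarrow> 'a set \<Rightarrow> real" where
  "stay_prob P n E = measure P {\<omega> \<in> space P. \<forall>j\<le>n. \<omega> j \<in> E}"

end

theory Submission
  imports Defs
begin

locale mc =
  fixes K :: "'a::topological_space \<Rightarrow> 'a measure" and Px :: "'a \<Rightarrow> (nat \<Rightarrow> 'a) measure"
  assumes kernel: "stochastic_kernel K" and laws: "\<And>x. markov_chain_law K x (Px x)"
begin

lemma prob[simp]: "prob_space (Px x)"
  using laws[of x] unfolding markov_chain_law_def by blast

lemma sets_Px[measurable_cong]: "sets (Px x) = sets (PiM UNIV (\<lambda>_. borel))"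
  using laws[of x] unfolding markov_chain_law_def by blast

lemma space_Px[simp]: "space (Px x) = UNIV"
  using sets_eq_imp_space_eq[OF sets_Px[of x]] by (simp add: space_PiM)

lemma AE0: "AE \<omega> in Px x. \<omega> 0 = x"
  using laws[of x] unfolding markov_chain_law_def by blast

lemma law: "B \<in> sets (PiM {..n} (\<lambda>_. borel)) \<Longrightarrow> A \<in> sets borel \<Longrightarrow>
        measure (Px x) {\<omega> \<in> space (Px x). restrict \<omega> {..n} \<in> B \<and> \<omega> (Suc n) \<in> A}
        = (\<integral>\<omega>. indicator B (restrict \<omega> {..n}) * measure (K (\<omega> n)) A \<partial>Px x)"
  using laws[of x] unfolding markov_chain_law_def by blast

lemma comp_meas[measurable]: "(\<lambda>\<omega>. \<omega> j) \<in> Px x \<rightarrow>\<^sub>M borel"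
  by (simp add: measurable_cong_sets[OF sets_Px refl])

lemma coord_sets[intro,simp]: "A \<in> sets borel \<Longrightarrow> {\<omega>. \<omega> j \<in> A} \<in> sets (Px x)"
  using measurable_sets[OF comp_meas[of j x], of A] by (simp add: vimage_def)

lemma restr_meas[measurable]: "(\<lambda>\<omega>. restrict \<omega> {..t}) \<in> Px x \<rightarrow>\<^sub>M PiM {..t} (\<lambda>_. borel)"
  by (simp add: measurable_cong_sets[OF sets_Px refl] measurable_restrict_subset)

lemma K_prob: "K \<in> borel \<rightarrow>\<^sub>M prob_algebra borel"
  using kernel unfolding stochastic_kernel_def .

lemma K_sub[measurable]: "K \<in> borel \<rightarrow>\<^sub>M subprob_algebra borel"
  using measurable_prob_algebraD[OF K_prob] .

lemma K_space: "prob_space (K y)" "sets (K y) = sets borel"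
  using measurable_space[OF K_prob, of y] by (auto simp: space_prob_algebra)

lemma rect_meas[measurable]: assumes [measurable]: "\<And>j. Q j \<in> sets borel"
  shows "{\<omega>\<in>space (Px x). \<forall>j\<in>{..t}. \<omega> j \<in> Q j} \<in> sets (Px x)"
  by measurable

lemma OS:
  fixes f :: "'a \<Rightarrow> real"
  assumes B[measurable]: "B \<in> sets (PiM {..t} (\<lambda>_. borel))" and f[measurable]: "f \<in> borel_measurable borel"
    and fb: "\<And>y. \<bar>f y\<bar> \<le> c"
  shows "(\<integral>\<omega>. indicator B (restrict \<omega> {..t}) * f (\<omega> (Suc t)) \<partial>Px x)
       = (\<integral>\<omega>. indicator B (restrict \<omega> {..t}) * (\<integral>y. f y \<partial>K (\<omega> t)) \<partial>Px x)"
proof -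
  interpret P: prob_space "Px x" by simp
  define g :: "(nat \<Rightarrow> 'a) \<Rightarrow> real" where "g \<omega> = indicator B (restrict \<omega> {..t})" for \<omega>
  have g[measurable]: "g \<in> borel_measurable (Px x)" unfolding g_def by measurable
  have g01: "0 \<le> g \<omega>" "g \<omega> \<le> 1" for \<omega> unfolding g_def by (auto split: split_indicator)
  define D where "D = density (Px x) g"
  have sD: "sets D = sets (Px x)" unfolding D_def by simp
  have spD: "space D = UNIV" unfolding D_def by simp
  have finD: "finite_measure D"
  proof (rule finite_measureI)
    have "emeasure D (space D) = (\<integral>\<^sup>+\<omega>. ennreal (g \<omega>) * indicator (space D) \<omega> \<partial>Px x)"
      unfolding D_def using sets.top[of "Px x"] by (subst emeasure_density) (auto simp: spD[unfolded D_def])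
    also have "\<dots> \<le> (\<integral>\<^sup>+\<omega>. 1 \<partial>Px x)"
      using g01 by (intro nn_integral_mono) (auto split: split_indicator)
    also have "\<dots> = 1" using P.emeasure_space_1 by simp
    finally show "emeasure D (space D) \<noteq> \<infinity>" by (auto simp: top_unique)
  qed
  have Kt[measurable]: "(\<lambda>\<omega>. K (\<omega> t)) \<in> D \<rightarrow>\<^sub>M subprob_algebra borel"
    by (simp add: measurable_cong_sets[OF sD refl])
  define \<mu>1 where "\<mu>1 = distr D borel (\<lambda>\<omega>. \<omega> (Suc t))"
  define \<mu>2 where "\<mu>2 = D \<bind> (\<lambda>\<omega>. K (\<omega> t))"
  have eq: "\<mu>1 = \<mu>2"
  proof (rule measure_eqI)
    show "sets \<mu>1 = sets \<mu>2" unfolding \<mu>1_def \<mu>2_def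
      by (subst sets_bind[where N=borel]) (auto simp: K_space spD)
  next
    fix A assume "A \<in> sets \<mu>1"
    hence A[measurable]: "A \<in> sets borel" unfolding \<mu>1_def by simp
    have RA: "{\<omega> \<in> space (Px x). restrict \<omega> {..t} \<in> B \<and> \<omega> (Suc t) \<in> A} \<in> sets (Px x)"
      by measurable
    have "emeasure \<mu>1 A = emeasure D {\<omega>. \<omega> (Suc t) \<in> A}"
      unfolding \<mu>1_def by (subst emeasure_distr) (auto simp: measurable_cong_sets[OF sD refl] spD vimage_def)
    also have "\<dots> = (\<integral>\<^sup>+\<omega>. ennreal (g \<omega>) * indicator {\<omega>. \<omega> (Suc t) \<in> A} \<omega> \<partial>Px x)"
      unfolding D_def by (subst emeasure_density) auto
    also have "\<dots> = emeasure (Px x) {\<omega> \<in> space (Px x). restrict \<omega> {..t} \<in> B \<and> \<omega> (Suc t) \<in> A}"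
      unfolding nn_integral_indicator[OF RA, symmetric] by (auto intro!: nn_integral_cong simp: g_def split: split_indicator)
    also have "\<dots> = ennreal (\<integral>\<omega>. g \<omega> * measure (K (\<omega> t)) A \<partial>Px x)"
      using law[OF B A, of x] by (simp add: P.emeasure_eq_measure g_def)
    also have "\<dots> = (\<integral>\<^sup>+\<omega>. ennreal (g \<omega> * measure (K (\<omega> t)) A) \<partial>Px x)"
    proof (rule nn_integral_eq_integral[symmetric])
      show "integrable (Px x) (\<lambda>\<omega>. g \<omega> * measure (K (\<omega> t)) A)"
      proof (rule P.integrable_const_bound[where B=1])
        show "AE \<omega> in Px x. norm (g \<omega> * measure (K (\<omega> t)) A) \<le> 1"
          using g01 by (auto intro!: mult_le_one simp: prob_space.prob_le_1[OF K_space(1)])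
        show "(\<lambda>\<omega>. g \<omega> * measure (K (\<omega> t)) A) \<in> borel_measurable (Px x)"
          by measurable
      qed
    qed (use g01 in auto)
    also have "\<dots> = (\<integral>\<^sup>+\<omega>. ennreal (g \<omega>) * emeasure (K (\<omega> t)) A \<partial>Px x)"
      using g01 by (auto intro!: nn_integral_cong simp: finite_measure.emeasure_eq_measure[OF prob_space.finite_measure[OF K_space(1)]] ennreal_mult)
    also have "\<dots> = (\<integral>\<^sup>+\<omega>. emeasure (K (\<omega> t)) A \<partial>D)"
      unfolding D_def by (subst nn_integral_density) auto
    also have "\<dots> = emeasure \<mu>2 A"
      unfolding \<mu>2_def by (subst emeasure_bind[where N=borel]) (auto simp: spD)
    finally show "emeasure \<mu>1 A = emeasure \<mu>2 A" .
  qed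
  have "(\<integral>\<omega>. g \<omega> * f (\<omega> (Suc t)) \<partial>Px x) = integral\<^sup>L \<mu>1 f"
    unfolding \<mu>1_def D_def
    by (subst integral_distr) (auto simp: measurable_cong_sets[OF sets_density refl] integral_density g01)
  also have "\<dots> = integral\<^sup>L \<mu>2 f" using eq by simp
  also have "\<dots> = (\<integral>\<omega>. (\<integral>y. f y \<partial>K (\<omega> t)) \<partial>D)"
    unfolding \<mu>2_def
  proof (rule integral_bind[where B=c and B'=1 and K=borel])
    show "finite_measure D" by (rule finD)
    show "AE \<omega> in D. emeasure (K (\<omega> t)) (space (K (\<omega> t))) \<le> ennreal 1"
      by (simp add: prob_space.emeasure_space_1[OF K_space(1)])
  qed (use fb in auto)
  also have "\<dots> = (\<integral>\<omega>. g \<omega> * (\<integral>y. f y \<partial>K (\<omega> t)) \<partial>Px x)"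
    unfolding D_def by (subst integral_density) (auto simp: g01)
  finally show ?thesis unfolding g_def .
qed

definition rect :: "(nat \<Rightarrow> 'a set) \<Rightarrow> nat \<Rightarrow> (nat \<Rightarrow> 'a) set" where
  "rect Q n = {\<omega>. \<forall>j\<le>n. \<omega> j \<in> Q j}"

lemma rect_sets[intro,simp]: "(\<And>j. Q j \<in> sets borel) \<Longrightarrow> rect Q n \<in> sets (Px x)"
proof -
  assume "\<And>j. Q j \<in> sets borel"
  moreover have "rect Q n = {\<omega>\<in>space (Px x). \<forall>j\<in>{..n}. \<omega> j \<in> Q j}" by (auto simp: rect_def)
  ultimately show ?thesis using rect_meas[of Q x n] by simp
qed

lemma UNIV_sets[simp]: "UNIV \<in> sets (Px x)"
  using sets.top[of "Px x"] by simp

definition H :: "nat \<Rightarrow> (nat \<Rightarrow> 'a set) \<Rightarrow> 'a \<Rightarrow> real" where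
  "H m A y = measure (Px y) (rect A m)"

lemma H01: "0 \<le> H m A y" "H m A y \<le> 1"
  unfolding H_def by (auto intro: prob_space.prob_le_1)

lemma meas_AE_point:
  assumes A: "A \<in> sets borel"
  shows "measure (Px y) {\<omega>. \<omega> 0 \<in> A} = indicator A y"
proof -
  interpret P: prob_space "Px y" by simp
  show ?thesis
  proof (cases "y \<in> A")
    case True
    have "measure (Px y) {\<omega>. \<omega> 0 \<in> A} = measure (Px y) UNIV"
      by (rule measure_eq_AE) (use AE0[of y] True A in \<open>auto elim!: AE_mp\<close>)
    then show ?thesis using True P.prob_space by simp
  next
    case False
    have "measure (Px y) {\<omega>. \<omega> 0 \<in> A} = measure (Px y) {}"
      by (rule measure_eq_AE) (use AE0[of y] False A in \<open>auto elim!: AE_mp\<close>)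
    then show ?thesis using False by simp
  qed
qed

lemma markov_rect:
  assumes "\<And>k. A k \<in> sets borel"
  shows "H m A \<in> borel_measurable borel \<and>
    (\<forall>x t P. (\<forall>j. P j \<in> sets borel) \<longrightarrow>
      measure (Px x) {\<omega>. (\<forall>j\<le>t. \<omega> j \<in> P j) \<and> (\<forall>k\<le>m. \<omega> (t+k) \<in> A k)}
      = (\<integral>\<omega>. indicator (rect P t) \<omega> * H m A (\<omega> t) \<partial>Px x))"
  using assms
proof (induction m arbitrary: A)
  case 0
  have H0: "H 0 A = indicator (A 0)"
    using meas_AE_point[OF 0(1)[of 0]] by (auto simp: H_def rect_def fun_eq_iff)
  show ?case
  proof (intro conjI allI impI)
    show "H 0 A \<in> borel_measurable borel" using 0 by (simp add: H0)
    fix x t and P :: "nat \<Rightarrow> 'a set" assume P: "\<forall>j. P j \<in> sets borel"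
    have S: "{\<omega>. (\<forall>j\<le>t. \<omega> j \<in> P j) \<and> (\<forall>k\<le>0. \<omega> (t+k) \<in> A k)} = rect (\<lambda>j. if j = t then P j \<inter> A 0 else P j) t"
      by (auto simp: rect_def)
    have "(\<integral>\<omega>. indicator (rect P t) \<omega> * H 0 A (\<omega> t) \<partial>Px x) =
        (\<integral>\<omega>. indicator (rect (\<lambda>j. if j = t then P j \<inter> A 0 else P j) t) \<omega> \<partial>Px x)"
      by (intro Bochner_Integration.integral_cong) (auto simp: H0 rect_def split: split_indicator)
    also have "\<dots> = measure (Px x) (rect (\<lambda>j. if j = t then P j \<inter> A 0 else P j) t)"
      by simp
    finally show "measure (Px x) {\<omega>. (\<forall>j\<le>t. \<omega> j \<in> P j) \<and> (\<forall>k\<le>0. \<omega> (t+k) \<in> A k)}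
      = (\<integral>\<omega>. indicator (rect P t) \<omega> * H 0 A (\<omega> t) \<partial>Px x)" unfolding S ..
  qed
next
  case (Suc m)
  have A[measurable]: "A k \<in> sets borel" for k using Suc.prems .
  define f where "f = H m (\<lambda>k. A (Suc k))"
  have IH: "f \<in> borel_measurable borel"
    "\<And>x t P. (\<forall>j. P j \<in> sets borel) \<Longrightarrow>
      measure (Px x) {\<omega>. (\<forall>j\<le>t. \<omega> j \<in> P j) \<and> (\<forall>k\<le>m. \<omega> (t+k) \<in> A (Suc k))}
      = (\<integral>\<omega>. indicator (rect P t) \<omega> * f (\<omega> t) \<partial>Px x)"
    using Suc.IH[of "\<lambda>k. A (Suc k)"] A unfolding f_def by blast+
  have f[measurable]: "f \<in> borel_measurable borel" by (rule IH(1))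
  have fb: "\<bar>f y\<bar> \<le> 1" for y using H01[of m "\<lambda>k. A (Suc k)" y] unfolding f_def by simp
  define G where "G z = (\<integral>y. f y \<partial>K z)" for z
  have G[measurable]: "G \<in> borel_measurable borel" unfolding G_def by measurable
  have core: "measure (Px x) {\<omega>. (\<forall>j\<le>t. \<omega> j \<in> P j) \<and> (\<forall>k\<le>Suc m. \<omega> (t+k) \<in> A k)}
      = (\<integral>\<omega>. indicator (Pi\<^sub>E {..t} (P(t := P t \<inter> A 0))) (restrict \<omega> {..t}) * G (\<omega> t) \<partial>Px x)"
    if P: "\<forall>j. P j \<in> sets borel" for x t and P :: "nat \<Rightarrow> 'a set"
  proof -
    define P' where "P' j = (if j = t then P t \<inter> A 0 else if j < t then P j else UNIV)" for j
    have P'[measurable]: "\<forall>j. P' j \<in> sets borel" using P A unfolding P'_def by auto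
    have S: "{\<omega>. (\<forall>j\<le>t. \<omega> j \<in> P j) \<and> (\<forall>k\<le>Suc m. \<omega> (t+k) \<in> A k)}
       = {\<omega>. (\<forall>j\<le>Suc t. \<omega> j \<in> P' j) \<and> (\<forall>k\<le>m. \<omega> (Suc t+k) \<in> A (Suc k))}"
    proof safe
      fix \<omega> assume a: "\<forall>j\<le>t. \<omega> j \<in> P j" "\<forall>k\<le>Suc m. \<omega> (t + k) \<in> A k"
      show "\<omega> (Suc t + k) \<in> A (Suc k)" if "k \<le> m" for k using a(2)[rule_format, of "Suc k"] that by simp
      show "\<omega> j \<in> P' j" if "j \<le> Suc t" for j using a(1) a(2)[rule_format, of 0] that by (auto simp: P'_def)
    next
      fix \<omega> assume a: "\<forall>j\<le>Suc t. \<omega> j \<in> P' j" "\<forall>k\<le>m. \<omega> (Suc t + k) \<in> A (Suc k)"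
      show "\<omega> j \<in> P j" if "j \<le> t" for j using a(1)[rule_format, of j] that by (auto simp: P'_def split: if_splits)
      show "\<omega> (t + k) \<in> A k" if "k \<le> Suc m" for k
      proof (cases k)
        case 0 then show ?thesis using a(1)[rule_format, of t] by (auto simp: P'_def)
      next
        case (Suc k') then show ?thesis using a(2)[rule_format, of k'] that by simp
      qed
    qed
    have "measure (Px x) {\<omega>. (\<forall>j\<le>t. \<omega> j \<in> P j) \<and> (\<forall>k\<le>Suc m. \<omega> (t+k) \<in> A k)}
       = (\<integral>\<omega>. indicator (rect P' (Suc t)) \<omega> * f (\<omega> (Suc t)) \<partial>Px x)"
      unfolding S by (rule IH(2)[OF P'])
    also have "\<dots> = (\<integral>\<omega>. indicator (Pi\<^sub>E {..t} (P(t := P t \<inter> A 0))) (restrict \<omega> {..t}) * f (\<omega> (Suc t)) \<partial>Px x)"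
      by (intro Bochner_Integration.integral_cong refl arg_cong2[where f="(*)"])
         (auto simp: rect_def P'_def restrict_PiE_iff Pi_iff le_Suc_eq split: split_indicator if_splits)
    also have "\<dots> = (\<integral>\<omega>. indicator (Pi\<^sub>E {..t} (P(t := P t \<inter> A 0))) (restrict \<omega> {..t}) * G (\<omega> t) \<partial>Px x)"
      unfolding G_def
    proof (rule OS[OF _ f fb])
      show "Pi\<^sub>E {..t} (P(t := P t \<inter> A 0)) \<in> sets (Pi\<^sub>M {..t} (\<lambda>_. borel))"
        using P A by (intro sets_PiM_I_finite) auto
    qed
    finally show ?thesis .
  qed
  have HS: "H (Suc m) A y = indicator (A 0) y * G y" for y
  proof -
    interpret P: prob_space "Px y" by simp
    have "H (Suc m) A y = measure (Px y) {\<omega>. (\<forall>j\<le>0. \<omega> j \<in> UNIV) \<and> (\<forall>k\<le>Suc m. \<omega> (0+k) \<in> A k)}"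
      unfolding H_def rect_def by simp
    also have "\<dots> = (\<integral>\<omega>. indicator (Pi\<^sub>E {..0} ((\<lambda>_. UNIV)(0 := UNIV \<inter> A 0))) (restrict \<omega> {..0}) * G (\<omega> 0) \<partial>Px y)"
      by (rule core) auto
    also have "\<dots> = (\<integral>\<omega>. indicator (A 0) (\<omega> 0) * G (\<omega> 0) \<partial>Px y)"
      by (intro Bochner_Integration.integral_cong refl) (auto simp: restrict_PiE_iff Pi_iff split: split_indicator)
    also have "\<dots> = (\<integral>\<omega>. indicator (A 0) y * G y \<partial>Px y)"
      by (rule integral_cong_AE) (measurable, use AE0[of y] in \<open>auto elim!: AE_mp\<close>)
    also have "\<dots> = indicator (A 0) y * G y" using P.prob_space by simp
    finally show ?thesis .
  qed
  show ?case
  proof (intro conjI allI impI)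
    show "H (Suc m) A \<in> borel_measurable borel" unfolding HS[abs_def] by measurable
    fix x t and P :: "nat \<Rightarrow> 'a set" assume P: "\<forall>j. P j \<in> sets borel"
    show "measure (Px x) {\<omega>. (\<forall>j\<le>t. \<omega> j \<in> P j) \<and> (\<forall>k\<le>Suc m. \<omega> (t+k) \<in> A k)}
      = (\<integral>\<omega>. indicator (rect P t) \<omega> * H (Suc m) A (\<omega> t) \<partial>Px x)"
      unfolding core[OF P] HS
      by (intro Bochner_Integration.integral_cong refl)
         (auto simp: rect_def restrict_PiE_iff Pi_iff split: split_indicator if_splits; metis Int_iff order_refl fun_upd_apply)
  qed
qed

definition Bad :: "'a set \<Rightarrow> 'a \<Rightarrow> nat \<Rightarrow> nat \<Rightarrow> real" where
  "Bad T y a L = measure (Px y) {\<omega>. \<exists>j. a \<le> j \<and> j \<le> a + L \<and> \<omega> j \<in> T}"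

lemma Bad01: "0 \<le> Bad T y a L" "Bad T y a L \<le> 1"
  unfolding Bad_def by (auto intro: prob_space.prob_le_1)

lemma MB:
  assumes P[measurable]: "\<And>j. P j \<in> sets borel" and T[measurable]: "T \<in> sets borel"
  shows "measure (Px x) {\<omega>. (\<forall>j\<le>t. \<omega> j \<in> P j) \<and> (\<exists>j. t + a \<le> j \<and> j \<le> t + a + L \<and> \<omega> j \<in> T)}
    = (\<integral>\<omega>. indicator (rect P t) \<omega> * Bad T (\<omega> t) a L \<partial>Px x)"
proof -
  interpret PP: prob_space "Px x" by simp
  define Af where "Af k = (if a \<le> k then - T else UNIV)" for k
  have Af[measurable]: "Af k \<in> sets borel" for k unfolding Af_def by auto
  have MR: "H (a+L) Af \<in> borel_measurable borel"
    "\<And>x t P. (\<forall>j. P j \<in> sets borel) \<Longrightarrow>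
      measure (Px x) {\<omega>. (\<forall>j\<le>t. \<omega> j \<in> P j) \<and> (\<forall>k\<le>a+L. \<omega> (t+k) \<in> Af k)}
      = (\<integral>\<omega>. indicator (rect P t) \<omega> * H (a+L) Af (\<omega> t) \<partial>Px x)"
    using markov_rect[of Af "a+L"] Af by blast+
  have Hm[measurable]: "H (a+L) Af \<in> borel_measurable borel" by (rule MR(1))
  define E2 where "E2 = {\<omega>. (\<forall>j\<le>t. \<omega> j \<in> P j) \<and> (\<forall>k\<le>a+L. \<omega> (t+k) \<in> Af k)}"
  have "{\<omega>\<in>space (Px x). (\<forall>j\<in>{..t}. \<omega> j \<in> P j) \<and> (\<forall>k\<in>{..a+L}. \<omega> (t+k) \<in> Af k)} \<in> sets (Px x)"
    by measurable
  moreover have "E2 = {\<omega>\<in>space (Px x). (\<forall>j\<in>{..t}. \<omega> j \<in> P j) \<and> (\<forall>k\<in>{..a+L}. \<omega> (t+k) \<in> Af k)}"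
    unfolding E2_def by auto
  ultimately have E2s: "E2 \<in> sets (Px x)" by simp
  have E1s: "rect P t \<in> sets (Px x)" by auto
  have set_eq: "{\<omega>. (\<forall>j\<le>t. \<omega> j \<in> P j) \<and> (\<exists>j. t + a \<le> j \<and> j \<le> t + a + L \<and> \<omega> j \<in> T)} = rect P t - E2"
  proof safe
    fix \<omega> j assume "\<forall>j\<le>t. \<omega> j \<in> P j" "t + a \<le> j" "j \<le> t + a + L" "\<omega> j \<in> T" "\<omega> \<in> E2"
    then have "\<forall>k\<le>a + L. \<omega> (t + k) \<in> Af k" unfolding E2_def by auto
    then have "\<omega> (t + (j - t)) \<in> Af (j - t)" using \<open>t + a \<le> j\<close> \<open>j \<le> t + a + L\<close> by (intro \<open>\<forall>k\<le>a + L. \<omega> (t + k) \<in> Af k\<close>[rule_format]) linarith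
    then show False using \<open>t + a \<le> j\<close> \<open>\<omega> j \<in> T\<close> by (simp add: Af_def split: if_splits)
  next
    fix \<omega> assume "\<omega> \<in> rect P t" "\<omega> \<notin> E2"
    then obtain k where "k \<le> a + L" "\<omega> (t+k) \<notin> Af k" unfolding E2_def rect_def by auto
    then show "\<exists>j. t + a \<le> j \<and> j \<le> t + a + L \<and> \<omega> j \<in> T"
      by (intro exI[of _ "t+k"]) (auto simp: Af_def split: if_splits)
  qed (auto simp: rect_def)
  have BadH: "Bad T y a L = 1 - H (a+L) Af y" for y
  proof -
    interpret Q: prob_space "Px y" by simp
    have "{\<omega>. \<exists>j. a \<le> j \<and> j \<le> a + L \<and> \<omega> j \<in> T} = space (Px y) - rect Af (a+L)"
      by (auto simp: rect_def Af_def split: if_splits)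
    then show ?thesis unfolding Bad_def H_def using Q.prob_compl[of "rect Af (a+L)"] by simp
  qed
  have int1: "integrable (Px x) (\<lambda>\<omega>. indicator (rect P t) \<omega> * H (a+L) Af (\<omega> t))"
  proof (rule PP.integrable_const_bound[where B=1])
    show "(\<lambda>\<omega>. indicator (rect P t) \<omega> * H (a+L) Af (\<omega> t)) \<in> borel_measurable (Px x)"
      using E1s by (intro borel_measurable_times borel_measurable_indicator measurable_compose[OF comp_meas Hm])
  qed (auto simp: H01 abs_le_iff intro!: mult_le_one split: split_indicator)
  have "measure (Px x) {\<omega>. (\<forall>j\<le>t. \<omega> j \<in> P j) \<and> (\<exists>j. t + a \<le> j \<and> j \<le> t + a + L \<and> \<omega> j \<in> T)}
     = measure (Px x) (rect P t) - measure (Px x) E2"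
    unfolding set_eq by (rule PP.finite_measure_Diff[OF E1s E2s]) (auto simp: E2_def rect_def)
  also have "measure (Px x) E2 = (\<integral>\<omega>. indicator (rect P t) \<omega> * H (a+L) Af (\<omega> t) \<partial>Px x)"
    unfolding E2_def by (rule MR(2)) auto
  also have "measure (Px x) (rect P t) = (\<integral>\<omega>. indicator (rect P t) \<omega> \<partial>Px x)" by simp
  also have "(\<integral>\<omega>. indicator (rect P t) \<omega> \<partial>Px x) - (\<integral>\<omega>. indicator (rect P t) \<omega> * H (a+L) Af (\<omega> t) \<partial>Px x)
     = (\<integral>\<omega>. indicator (rect P t) \<omega> - indicator (rect P t) \<omega> * H (a+L) Af (\<omega> t) \<partial>Px x)"
    by (rule Bochner_Integration.integral_diff[symmetric]) (auto intro!: int1 integrable_real_indicator simp: E1s less_top[symmetric])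
  also have "\<dots> = (\<integral>\<omega>. indicator (rect P t) \<omega> * Bad T (\<omega> t) a L \<partial>Px x)"
    by (simp add: BadH algebra_simps)
  finally show ?thesis .
qed

lemma MBle:
  assumes P: "\<And>j. P j \<in> sets borel" and T: "T \<in> sets borel"
    and c: "\<And>z. z \<in> P t \<Longrightarrow> Bad T z a L \<le> c" and c0: "0 \<le> c"
  shows "measure (Px x) {\<omega>. (\<forall>j\<le>t. \<omega> j \<in> P j) \<and> (\<exists>j. t + a \<le> j \<and> j \<le> t + a + L \<and> \<omega> j \<in> T)}
    \<le> c * measure (Px x) (rect P t)"
proof -
  interpret PP: prob_space "Px x" by simp
  have "(\<integral>\<omega>. indicator (rect P t) \<omega> * Bad T (\<omega> t) a L \<partial>Px x) \<le> (\<integral>\<omega>. c * indicator (rect P t) \<omega> \<partial>Px x)"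
  proof (rule integral_mono_AE')
    show "integrable (Px x) (\<lambda>\<omega>. c * indicator (rect P t) \<omega>)"
      using P by (intro integrable_mult_right integrable_real_indicator) (auto simp: less_top[symmetric])
    show "AE \<omega> in Px x. indicator (rect P t) \<omega> * Bad T (\<omega> t) a L \<le> c * indicator (rect P t) \<omega>"
      using c by (auto simp: rect_def split: split_indicator)
    show "AE \<omega> in Px x. 0 \<le> c * indicator (rect P t) \<omega>"
      using c0 by auto
  qed
  also have "\<dots> = c * measure (Px x) (rect P t)" by simp
  finally show ?thesis using MB[OF P T] by simp
qed

lemma first_exit:
  assumes "\<omega> \<notin> rect (\<lambda>_. S) n"
  shows "\<exists>t\<le>n. \<omega> \<in> rect (\<lambda>j. if j < t then S else - S) t"
proof -
  obtain j where j: "j \<le> n" "\<omega> j \<notin> S" using assms by (auto simp: rect_def)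
  define t where "t = (LEAST j. \<omega> j \<notin> S)"
  have t1: "\<omega> t \<notin> S" unfolding t_def by (rule LeastI[of _ j]) (rule j(2))
  have t2: "t \<le> j" unfolding t_def by (rule Least_le) (rule j(2))
  have t3: "\<omega> i \<in> S" if "i < t" for i using not_less_Least[of i "\<lambda>j. \<omega> j \<notin> S"] that unfolding t_def by blast
  show ?thesis using t1 t2 t3 j(1) by (intro exI[of _ t]) (auto simp: rect_def)
qed

lemma EX:
  assumes S[measurable]: "S \<in> sets borel" and T[measurable]: "T \<in> sets borel" and na: "n \<le> a"
    and i: "\<And>t z. t \<le> n \<Longrightarrow> z \<notin> S \<Longrightarrow> Bad T z (a - t) L \<le> c1" and c1: "0 \<le> c1"
    and ii: "\<And>z. z \<in> S \<Longrightarrow> Bad T z (a - n) L \<le> c2" and c2: "0 \<le> c2"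
  shows "Bad T y a L \<le> c1 * (1 - measure (Px y) (rect (\<lambda>_. S) n)) + c2 * measure (Px y) (rect (\<lambda>_. S) n)"
proof -
  interpret PP: prob_space "Px y" by simp
  define Tt where "Tt t = (\<lambda>j. if j < t then S else - S)" for t :: nat
  have Tt[measurable]: "Tt t j \<in> sets borel" for t j unfolding Tt_def by auto
  define St where "St = rect (\<lambda>_. S) n"
  have Sts: "St \<in> sets (Px y)" unfolding St_def by auto
  have Tts: "rect (Tt t) t \<in> sets (Px y)" for t by auto
  define E where "E = {\<omega>. \<exists>j. a \<le> j \<and> j \<le> a + L \<and> \<omega> j \<in> T}"
  have "{\<omega>\<in>space (Px y). \<exists>j\<in>{a..a+L}. \<omega> j \<in> T} \<in> sets (Px y)" by measurable
  moreover have "E = {\<omega>\<in>space (Px y). \<exists>j\<in>{a..a+L}. \<omega> j \<in> T}" unfolding E_def by auto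
  ultimately have Es: "E \<in> sets (Px y)" by simp
  have cover: "E \<subseteq> (\<Union>t\<in>{..n}. E \<inter> rect (Tt t) t) \<union> (E \<inter> St)"
    using first_exit[of _ S n] unfolding St_def Tt_def by blast
  have disj: "disjoint_family_on (\<lambda>t. rect (Tt t) t) {..n}"
    unfolding disjoint_family_on_def
  proof (intro ballI impI)
    fix s t :: nat assume "s \<noteq> t"
    show "rect (Tt s) s \<inter> rect (Tt t) t = {}"
    proof (cases "s < t")
      case True then show ?thesis by (auto simp: rect_def Tt_def)
    next
      case False then have "t < s" using \<open>s \<noteq> t\<close> by simp
      then show ?thesis by (auto simp: rect_def Tt_def)
    qed
  qed
  have union: "(\<Union>t\<in>{..n}. rect (Tt t) t) = space (Px y) - St"
  proof
    show "(\<Union>t\<in>{..n}. rect (Tt t) t) \<subseteq> space (Px y) - St"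
      by (auto simp: rect_def Tt_def St_def)
    show "space (Px y) - St \<subseteq> (\<Union>t\<in>{..n}. rect (Tt t) t)"
      using first_exit[of _ S n] unfolding St_def Tt_def by auto
  qed
  have Us: "(\<Union>t\<in>{..n}. rect (Tt t) t) \<in> sets (Px y)" unfolding union using Sts by auto
  have sumT: "(\<Sum>t\<in>{..n}. measure (Px y) (rect (Tt t) t)) = 1 - measure (Px y) St"
  proof -
    have "(\<Sum>t\<in>{..n}. measure (Px y) (rect (Tt t) t)) = measure (Px y) (\<Union>t\<in>{..n}. rect (Tt t) t)"
      by (rule measure_finite_Union[symmetric]) (use disj Tts in \<open>auto simp: PP.emeasure_finite\<close>)
    also have "\<dots> = 1 - measure (Px y) St" unfolding union using PP.prob_compl[OF Sts] by simp
    finally show ?thesis .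
  qed
  have "Bad T y a L = measure (Px y) E" unfolding Bad_def E_def ..
  also have "\<dots> \<le> measure (Px y) ((\<Union>t\<in>{..n}. E \<inter> rect (Tt t) t) \<union> (E \<inter> St))"
    using cover Es Sts Us by (intro PP.finite_measure_mono) auto
  also have "\<dots> \<le> measure (Px y) (\<Union>t\<in>{..n}. E \<inter> rect (Tt t) t) + measure (Px y) (E \<inter> St)"
    using Es Sts Tts by (intro measure_Un_le sets.finite_UN sets.Int ballI) auto
  also have "measure (Px y) (\<Union>t\<in>{..n}. E \<inter> rect (Tt t) t) \<le> (\<Sum>t\<in>{..n}. measure (Px y) (E \<inter> rect (Tt t) t))"
    using Es Tts by (intro measure_UNION_le) auto
  also have "(\<Sum>t\<in>{..n}. measure (Px y) (E \<inter> rect (Tt t) t)) \<le> (\<Sum>t\<in>{..n}. c1 * measure (Px y) (rect (Tt t) t))"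
  proof (rule sum_mono)
    fix t assume t: "t \<in> {..n}"
    have "E \<inter> rect (Tt t) t = {\<omega>. (\<forall>j\<le>t. \<omega> j \<in> Tt t j) \<and> (\<exists>j. t + (a - t) \<le> j \<and> j \<le> t + (a - t) + L \<and> \<omega> j \<in> T)}"
      using t na by (auto simp: E_def rect_def)
    also have "measure (Px y) \<dots> \<le> c1 * measure (Px y) (rect (Tt t) t)"
      by (rule MBle) (use t i c1 in \<open>auto simp: Tt_def\<close>)
    finally show "measure (Px y) (E \<inter> rect (Tt t) t) \<le> c1 * measure (Px y) (rect (Tt t) t)" .
  qed
  also have "measure (Px y) (E \<inter> St) \<le> c2 * measure (Px y) St"
  proof -
    have "E \<inter> St = {\<omega>. (\<forall>j\<le>n. \<omega> j \<in> S) \<and> (\<exists>j. n + (a - n) \<le> j \<and> j \<le> n + (a - n) + L \<and> \<omega> j \<in> T)}"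
      using na by (auto simp: E_def rect_def St_def)
    also have "measure (Px y) \<dots> \<le> c2 * measure (Px y) (rect (\<lambda>_. S) n)"
      by (rule MBle) (use ii c2 in auto)
    finally show ?thesis unfolding St_def .
  qed
  finally show ?thesis using sumT unfolding St_def by (simp add: sum_distrib_left[symmetric])
qed

lemma exit_rect: "E \<in> sets borel \<Longrightarrow> exit_prob (Px z) n E = 1 - measure (Px z) (rect (\<lambda>_. E) n)"
proof -
  assume E: "E \<in> sets borel"
  interpret PP: prob_space "Px z" by simp
  have "{\<omega> \<in> space (Px z). \<exists>j\<le>n. \<omega> j \<notin> E} = space (Px z) - rect (\<lambda>_. E) n" by (auto simp: rect_def)
  then show ?thesis unfolding exit_prob_def using PP.prob_compl[of "rect (\<lambda>_. E) n"] E by simp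
qed

lemma stay_rect: "stay_prob (Px z) n E = measure (Px z) (rect (\<lambda>_. E) n)"
  unfolding stay_prob_def rect_def by simp

lemma rect_prob: "0 \<le> measure (Px z) (rect Q n)" "measure (Px z) (rect Q n) \<le> 1"
  by (auto intro: prob_space.prob_le_1)

end

theorem proposition4p3:
  fixes K :: "'a::topological_space \<Rightarrow> 'a measure"
    and Px :: "'a \<Rightarrow> (nat \<Rightarrow> 'a) measure"
    and S0 S1 S2 :: "'a set"
    and r b0 :: real and n0 n1 n2 q :: nat
  assumes compact_space: "compact (UNIV :: 'a set)"
    and kernel: "stochastic_kernel K"
    and laws: "\<And>x. markov_chain_law K x (Px x)"
    and S0: "S0 \<in> sets borel" and S1: "S1 \<in> sets borel" and S2: "S2 \<in> sets borel"
    and S01: "S0 \<subseteq> S1" and S12: "S1 \<subseteq> S2"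
    and r_pos: "r > 0"
    and b0_pos: "b0 > 0"
    and A1: "\<And>x. x \<in> S0 \<Longrightarrow> exit_prob (Px x) n0 S0 \<ge> b0"
    and A2: "\<And>x. x \<in> S1 - S0 \<Longrightarrow> exit_prob (Px x) n1 S1 \<ge> 1 - r / 4"
    and A3: "\<And>x. x \<in> S2 - S1 \<Longrightarrow> exit_prob (Px x) n2 S2 \<ge> 1 - r / 4"
    and A4: "\<And>x n. x \<in> - S2 \<Longrightarrow> stay_prob (Px x) n (- S1) \<ge> 1 - r / 4"
    and q: "(1 - b0) ^ q < r / 4"
  shows "\<forall>x. measure (Px x) {\<omega> \<in> space (Px x). \<exists>j \<ge> q * n0 + n1 + n2. \<omega> j \<in> S1} < r"
proof -
  interpret mc K Px by unfold_locales (rule kernel, rule laws)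
  have C4: "Bad S1 z a L \<le> r / 4" if z: "z \<notin> S2" for z a L
  proof -
    interpret PP: prob_space "Px z" by simp
    have "{\<omega>. \<exists>j. a \<le> j \<and> j \<le> a + L \<and> \<omega> j \<in> S1} \<subseteq> space (Px z) - rect (\<lambda>_. - S1) (a + L)"
      by (auto simp: rect_def)
    then have "Bad S1 z a L \<le> measure (Px z) (space (Px z) - rect (\<lambda>_. - S1) (a + L))"
      unfolding Bad_def using S1 by (intro PP.finite_measure_mono) auto
    also have "\<dots> = 1 - stay_prob (Px z) (a + L) (- S1)"
      using S1 by (subst PP.prob_compl) (auto simp: stay_rect)
    also have "\<dots> \<le> r / 4" using A4[of z "a + L"] z by simp
    finally show ?thesis .
  qed
  have C3: "Bad S1 z a L \<le> r / 2" if z: "z \<notin> S1" and a: "n2 \<le> a" for z a L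
  proof (cases "z \<in> S2")
    case False then show ?thesis using C4[of z a L] r_pos by simp
  next
    case True
    let ?ps = "measure (Px z) (rect (\<lambda>_. S2) n2)"
    have ps: "?ps \<le> r / 4" using A3[of z] True z exit_rect[OF S2, of z n2] by simp
    have "Bad S1 z a L \<le> r / 4 * (1 - ?ps) + 1 * ?ps"
      by (rule EX[OF S2 S1 a]) (use C4 r_pos Bad01 in auto)
    also have "\<dots> = r / 4 + ?ps - (r * ?ps) / 4" by (simp add: algebra_simps)
    also have "\<dots> \<le> r / 2" using ps r_pos rect_prob[of z "\<lambda>_. S2" n2] mult_nonneg_nonneg[of r ?ps] by linarith
    finally show ?thesis .
  qed
  have C2: "Bad S1 z a L \<le> 3 * r / 4" if z: "z \<notin> S0" and a: "n1 + n2 \<le> a" for z a L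
  proof (cases "z \<in> S1")
    case False then show ?thesis using C3[of z a L] r_pos a by simp
  next
    case True
    let ?ps = "measure (Px z) (rect (\<lambda>_. S1) n1)"
    have ps: "?ps \<le> r / 4" using A2[of z] True z exit_rect[OF S1, of z n1] by simp
    have "Bad S1 z a L \<le> r / 2 * (1 - ?ps) + 1 * ?ps"
      by (rule EX[OF S1 S1]) (use a C3 r_pos Bad01 in auto)
    also have "\<dots> = r / 2 + ?ps - (r * ?ps) / 2" by (simp add: algebra_simps)
    also have "\<dots> \<le> 3 * r / 4" using ps r_pos rect_prob[of z "\<lambda>_. S1" n1] mult_nonneg_nonneg[of r ?ps] by linarith
    finally show ?thesis .
  qed
  have C1: "Bad S1 z a L \<le> (1 - b0) ^ k + 3 * r / 4" if z: "z \<in> S0" and a: "k * n0 + n1 + n2 \<le> a" for k z a L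
    using z a
  proof (induction k arbitrary: z a L)
    case 0 then show ?case using Bad01[of S1 z a L] r_pos by simp
  next
    case (Suc k)
    have b0: "b0 \<le> 1" using A1[OF Suc.prems(1)] exit_rect[OF S0, of z n0] measure_nonneg[of "Px z" "rect (\<lambda>_. S0) n0"] by linarith
    let ?ps = "measure (Px z) (rect (\<lambda>_. S0) n0)"
    have ps: "?ps \<le> 1 - b0" using A1[OF Suc.prems(1)] exit_rect[OF S0, of z n0] by simp
    have pk: "0 \<le> (1 - b0) ^ k" using b0 by simp
    have "Bad S1 z a L \<le> 3 * r / 4 * (1 - ?ps) + ((1 - b0) ^ k + 3 * r / 4) * ?ps"
    proof (rule EX[OF S0 S1])
      show "n0 \<le> a" using Suc.prems(2) by simp
      show "Bad S1 z' (a - t) L \<le> 3 * r / 4" if "t \<le> n0" "z' \<notin> S0" for t z'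
        using C2[of z' "a - t" L] that Suc.prems(2) by simp
      show "Bad S1 z' (a - n0) L \<le> (1 - b0) ^ k + 3 * r / 4" if "z' \<in> S0" for z'
        using Suc.IH[of z' "a - n0" L] that Suc.prems(2) by simp
    qed (use r_pos pk in auto)
    also have "\<dots> = 3 * r / 4 + (1 - b0) ^ k * ?ps" by (simp add: field_simps)
    also have "\<dots> \<le> 3 * r / 4 + (1 - b0) ^ k * (1 - b0)" using ps pk by (simp add: mult_left_mono)
    finally show ?case by (simp add: algebra_simps)
  qed
  show ?thesis
  proof
    fix x
    interpret PP: prob_space "Px x" by simp
    define N where "N = q * n0 + n1 + n2"
    define \<beta> where "\<beta> = (if x \<in> S0 then (1 - b0) ^ q + 3 * r / 4 else 3 * r / 4)"
    have \<beta>: "\<beta> < r" using q r_pos unfolding \<beta>_def by auto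
    have bnd: "Bad S1 x N L \<le> \<beta>" for L
      using C1[of x q N L] C2[of x N L] unfolding \<beta>_def N_def by auto
    define En where "En L = {\<omega>. \<exists>j. N \<le> j \<and> j \<le> N + L \<and> \<omega> j \<in> S1}" for L
    have Ens: "En L \<in> sets (Px x)" for L
    proof -
      have "{\<omega>\<in>space (Px x). \<exists>j\<in>{N..N+L}. \<omega> j \<in> S1} \<in> sets (Px x)" using S1 by measurable
      moreover have "En L = {\<omega>\<in>space (Px x). \<exists>j\<in>{N..N+L}. \<omega> j \<in> S1}" unfolding En_def by auto
      ultimately show ?thesis by simp
    qed
    have inc: "incseq En" unfolding incseq_def En_def by force
    have U: "{\<omega> \<in> space (Px x). \<exists>j \<ge> q * n0 + n1 + n2. \<omega> j \<in> S1} = (\<Union>L. En L)"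
      unfolding N_def[symmetric]
    proof safe
      fix \<omega> j assume "N \<le> j" "\<omega> j \<in> S1"
      then have "\<omega> \<in> En (j - N)" unfolding En_def by auto
      then show "\<omega> \<in> (\<Union>L. En L)" by blast
    qed (auto simp: En_def)
    have lim: "(\<lambda>L. measure (Px x) (En L)) \<longlonglongrightarrow> measure (Px x) (\<Union>L. En L)"
      by (rule Lim_measure_incseq) (use Ens inc in \<open>auto simp: PP.emeasure_finite\<close>)
    have "measure (Px x) (\<Union>L. En L) \<le> \<beta>"
      by (rule Lim_bounded[OF lim, of 0]) (use bnd in \<open>auto simp: Bad_def En_def\<close>)
    then show "measure (Px x) {\<omega> \<in> space (Px x). \<exists>j \<ge> q * n0 + n1 + n2. \<omega> j \<in> S1} < r"
      unfolding U using \<beta> by simp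
  qed
qed

end
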